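(* Suppose $\ell$ is a proper loss and fix $g\in\Delta_m$. Define $f^*:\mathcal{X}\to\Delta_m$ by $f^*_y(x)=\frac{\frac{g_y}{\pi_y}\eta_y(x)}{\sum_{j=1}^m\frac{g_j}{\pi_j}\eta_j(x)}$ at points where the denominator is positive, and $f^*(x)$ an arbitrary fixed element of $\Delta_m$ otherwise. Then $f^*$ minimizes $f\mapsto\sum_{i=1}^m g_i\,\ell_i(f)$ over all measurable $f:\mathcal{X}\to\Delta_m$.
   Context: $\mathcal{X}$ is a measurable space, $[m]=\{1,\dots,m\}$, $(X,Y)\sim\mathcal{D}$ on $\mathcal{X}\times[m]$, $\eta_y(x)=\mathbb{P}(Y=y\mid X=x)$, $\pi_y=\mathbb{P}(Y=y)>0$ for all $y$. $\Delta_m$ is the probability simplex in $\mathbb{R}^m$. A loss $\ell:[m]\times\Delta_m\to[0,\infty)$ is proper if for every $p\in\Delta_m$, $p\in\arg\min_{q\in\Delta_m}\sum_y p_y\ell(y,q)$. Per-class loss: $\ell_i(f)=\mathbb{E}[\ell(Y,f(X))\mid Y=i]$ for measurable $f:\mathcal{X}\to\Delta_m$. *)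

theory Defs
  imports "HOL-Analysis.Analysis" "HOL-Probability.Probability"
begin

text \<open>Labels [m] are the elements of a finite type 'm (so m = CARD('m)).
  The probability prob_simplex in R^m.\<close>
definition prob_simplex :: "(real ^ 'm::finite) set" where
  "prob_simplex = {p. (\<forall>i. 0 \<le> p $ i) \<and> (\<Sum>i\<in>UNIV. p $ i) = 1}"

definition proper_loss :: "('m::finite \<Rightarrow> real ^ 'm \<Rightarrow> real) \<Rightarrow> bool" where
  "proper_loss l \<longleftrightarrow> (\<forall>y q. q \<in> prob_simplex \<longrightarrow> 0 \<le> l y q) \<and>
     (\<forall>p\<in>prob_simplex. \<forall>q\<in>prob_simplex. (\<Sum>y\<in>UNIV. p $ y * l y p) \<le> (\<Sum>y\<in>UNIV. p $ y * l y q))"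

definition class_prior :: "('a \<times> 'm) measure \<Rightarrow> 'm \<Rightarrow> real" where
  "class_prior D y = measure D {z \<in> space D. snd z = y}"

text \<open>Per-class loss l_i(f) = E[l(Y, f X) | Y = i] (nonnegative, so valued in ennreal).\<close>
definition class_loss ::
  "('a \<times> 'm) measure \<Rightarrow> ('m \<Rightarrow> real ^ 'm \<Rightarrow> real) \<Rightarrow> ('a \<Rightarrow> real ^ 'm) \<Rightarrow> 'm \<Rightarrow> ennreal" where
  "class_loss D l f i =
     (\<integral>\<^sup>+ z. ennreal (l (snd z) (f (fst z))) * indicator {z. snd z = i} z \<partial>D)
       / emeasure D {z \<in> space D. snd z = i}"

definition weighted_loss ::
  "('a \<times> 'm::finite) measure \<Rightarrow> ('m \<Rightarrow> real ^ 'm \<Rightarrow> real) \<Rightarrow> real ^ 'm \<Rightarrow> ('a \<Rightarrow> real ^ 'm) \<Rightarrow> ennreal" where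
  "weighted_loss D l g f = (\<Sum>i\<in>UNIV. ennreal (g $ i) * class_loss D l f i)"

definition fstar ::
  "('a \<times> 'm::finite) measure \<Rightarrow> ('m \<Rightarrow> 'a \<Rightarrow> real) \<Rightarrow> real ^ 'm \<Rightarrow> real ^ 'm \<Rightarrow> 'a \<Rightarrow> real ^ 'm" where
  "fstar D \<eta> g c x =
     (let den = (\<Sum>j\<in>UNIV. g $ j / class_prior D j * \<eta> j x) in
      if den > 0 then (\<chi> y. (g $ y / class_prior D y * \<eta> y x) / den) else c)"

end

theory Submission
  imports Defs
begin

lemma vec_borel_measurable:
  fixes F :: "'b \<Rightarrow> real ^ 'm::finite"
  assumes "\<And>i. (\<lambda>x. F x $ i) \<in> borel_measurable N"
  shows "F \<in> borel_measurable N"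
proof (rule iffD2[OF borel_measurable_euclidean_space], rule ballI)
  fix b :: "real ^ 'm" assume "b \<in> Basis"
  then obtain i u where u: "u \<in> (Basis :: real set)" and b: "b = axis i u"
    unfolding Basis_vec_def by blast
  have "u = 1" using u by simp
  then have eq: "(\<lambda>x. F x \<bullet> b) = (\<lambda>x. F x $ i)" unfolding b by (simp only: cart_eq_inner_axis)
  show "(\<lambda>x. F x \<bullet> b) \<in> borel_measurable N" unfolding eq by (rule assms)
qed

lemma key_density:
  fixes M :: "'a measure" and D :: "('a \<times> 'm) measure" and h :: "'a \<Rightarrow> ennreal"
  assumes sets_D: "sets D = sets (M \<Otimes>\<^sub>M count_space UNIV)"
    and eta_meas: "\<eta> \<in> borel_measurable M"
    and eta_cond: "\<And>A. A \<in> sets M \<Longrightarrow>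
          emeasure D (A \<times> {y}) = (\<integral>\<^sup>+ x. ennreal (\<eta> x) * indicator A x \<partial>(distr D M fst))"
    and h: "h \<in> borel_measurable M"
  shows "(\<integral>\<^sup>+ z. h (fst z) * indicator {z. snd z = y} z \<partial>D)
       = (\<integral>\<^sup>+ x. ennreal (\<eta> x) * h x \<partial>(distr D M fst))"
proof -
  have fst_m: "fst \<in> measurable D M"
    using measurable_fst[of M "count_space UNIV"] measurable_cong_sets[OF sets_D refl] by blast
  have snd_m: "snd \<in> measurable D (count_space UNIV)"
    using measurable_snd[of M "count_space UNIV"] measurable_cong_sets[OF sets_D refl] by blast
  have spD: "space D = space M \<times> UNIV"
    using sets_eq_imp_space_eq[OF sets_D] by (simp add: space_pair_measure)
  have Sy: "{z \<in> space D. snd z = y} \<in> sets D"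
    using measurable_sets[OF snd_m, of "{y}"] by (simp add: vimage_def Int_def conj_commute)
  have ind_m: "(\<lambda>z. indicator {z. snd z = y} z :: ennreal) \<in> borel_measurable D"
  proof -
    have "(\<lambda>z. indicator {z. snd z = y} z :: ennreal) = (\<lambda>z. indicator {y} (snd z))"
      by (auto simp: indicator_def)
    then show ?thesis using snd_m by simp
  qed
  define Di where "Di = distr (density D (\<lambda>z. indicator {z. snd z = y} z)) M fst"
  define Ni where "Ni = density (distr D M fst) (\<lambda>x. ennreal (\<eta> x))"
  have eq: "Di = Ni"
  proof (rule measure_eqI)
    show "sets Di = sets Ni" unfolding Di_def Ni_def by simp
    fix A assume A: "A \<in> sets Di"
    then have AM: "A \<in> sets M" unfolding Di_def by simp
    have fstm2: "fst \<in> measurable (density D (\<lambda>z. indicator {z. snd z = y} z)) M"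
      using fst_m by simp
    have "emeasure Di A = emeasure (density D (\<lambda>z. indicator {z. snd z = y} z)) (fst -` A \<inter> space D)"
      unfolding Di_def by (subst emeasure_distr[OF fstm2 AM]) simp
    also have "\<dots> = (\<integral>\<^sup>+ z. indicator {z. snd z = y} z * indicator (fst -` A \<inter> space D) z \<partial>D)"
      by (rule emeasure_density[OF ind_m]) (rule measurable_sets[OF fst_m AM])
    also have "\<dots> = (\<integral>\<^sup>+ z. indicator (A \<times> {y}) z \<partial>D)"
      apply (rule nn_integral_cong)
      using sets.sets_into_space[OF AM] spD by (auto simp: indicator_def)
    also have "\<dots> = emeasure D (A \<times> {y})"
    proof (rule nn_integral_indicator)
      have "A \<times> {y} = (fst -` A \<inter> space D) \<inter> {z \<in> space D. snd z = y}"
        using sets.sets_into_space[OF AM] spD by auto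
      then show "A \<times> {y} \<in> sets D" using measurable_sets[OF fst_m AM] Sy by auto
    qed
    also have "\<dots> = emeasure Ni A"
      unfolding Ni_def using eta_meas fst_m AM
      by (subst emeasure_density) (auto simp: eta_cond)
    finally show "emeasure Di A = emeasure Ni A" .
  qed
  have "(\<integral>\<^sup>+ x. h x \<partial>Di) = (\<integral>\<^sup>+ x. h x \<partial>Ni)" using eq by simp
  moreover have "(\<integral>\<^sup>+ x. h x \<partial>Di) = (\<integral>\<^sup>+ z. h (fst z) * indicator {z. snd z = y} z \<partial>D)"
    unfolding Di_def
    using fst_m h ind_m
    by (subst nn_integral_distr) (auto simp: nn_integral_density mult.commute)
  moreover have "(\<integral>\<^sup>+ x. h x \<partial>Ni) = (\<integral>\<^sup>+ x. ennreal (\<eta> x) * h x \<partial>(distr D M fst))"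
    unfolding Ni_def using eta_meas fst_m h
    by (subst nn_integral_density) auto
  ultimately show ?thesis by simp
qed


lemma wl_integral:
  fixes M :: "'a measure" and D :: "('a \<times> 'm::finite) measure"
    and \<eta> :: "'m \<Rightarrow> 'a \<Rightarrow> real" and l :: "'m \<Rightarrow> real ^ 'm \<Rightarrow> real" and g :: "real ^ 'm"
  assumes D: "prob_space D"
    and sets_D: "sets D = sets (M \<Otimes>\<^sub>M count_space UNIV)"
    and pi_pos: "\<And>y. class_prior D y > 0"
    and eta_meas: "\<And>y. \<eta> y \<in> borel_measurable M"
    and eta_nonneg: "\<And>y x. 0 \<le> \<eta> y x"
    and eta_cond: "\<And>y A. A \<in> sets M \<Longrightarrow>
          emeasure D (A \<times> {y}) = (\<integral>\<^sup>+ x. ennreal (\<eta> y x) * indicator A x \<partial>(distr D M fst))"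
    and proper: "proper_loss l"
    and l_meas: "\<And>y. l y \<in> borel_measurable (restrict_space borel prob_simplex)"
    and g: "g \<in> prob_simplex"
    and f: "f \<in> borel_measurable M" and fs: "\<And>x. x \<in> space M \<Longrightarrow> f x \<in> prob_simplex"
  shows "weighted_loss D l g f = (\<integral>\<^sup>+ x. ennreal (\<Sum>i\<in>UNIV. g $ i / class_prior D i * \<eta> i x * l i (f x)) \<partial>(distr D M fst))"
proof -
  have fst_m: "fst \<in> measurable D M"
    using measurable_fst[of M "count_space UNIV"] measurable_cong_sets[OF sets_D refl] by blast
  have gnn: "\<And>i. 0 \<le> g $ i" using g by (simp add: prob_simplex_def)
  have lnn: "\<And>i x. x \<in> space M \<Longrightarrow> 0 \<le> l i (f x)"
    using proper fs by (simp add: proper_loss_def)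
  have fr: "f \<in> measurable M (restrict_space borel prob_simplex)"
    using fs f by (intro measurable_restrict_space2) auto
  have hm: "\<And>i. (\<lambda>x. ennreal (l i (f x))) \<in> borel_measurable M"
    using measurable_comp[OF fr l_meas] by (simp add: o_def)
  have hr: "\<And>i. (\<lambda>x. l i (f x)) \<in> borel_measurable M"
    using measurable_comp[OF fr l_meas] by (simp add: o_def)
  have mi: "\<And>i. (\<lambda>x. ennreal (g $ i / class_prior D i * \<eta> i x * l i (f x))) \<in> borel_measurable M"
    using hr eta_meas by (intro measurable_compose[OF _ measurable_ennreal] borel_measurable_times) auto
  have trm: "ennreal (g $ i) * class_loss D l f i =
      (\<integral>\<^sup>+ x. ennreal (g $ i / class_prior D i * \<eta> i x * l i (f x)) \<partial>(distr D M fst))" for i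
  proof -
    have em: "emeasure D {z \<in> space D. snd z = i} = ennreal (class_prior D i)"
      unfolding class_prior_def using finite_measure.emeasure_eq_measure[OF prob_space.axioms(1)[OF D]] by simp
    have "(\<integral>\<^sup>+ z. ennreal (l (snd z) (f (fst z))) * indicator {z. snd z = i} z \<partial>D)
        = (\<integral>\<^sup>+ z. ennreal (l i (f (fst z))) * indicator {z. snd z = i} z \<partial>D)"
      by (rule nn_integral_cong) (auto simp: indicator_def)
    also have "\<dots> = (\<integral>\<^sup>+ x. ennreal (\<eta> i x) * ennreal (l i (f x)) \<partial>(distr D M fst))"
      by (rule key_density[OF sets_D eta_meas eta_cond hm])
    finally have I: "class_loss D l f i = (\<integral>\<^sup>+ x. ennreal (\<eta> i x) * ennreal (l i (f x)) \<partial>(distr D M fst)) * ennreal (1 / class_prior D i)"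
      unfolding class_loss_def em using pi_pos[of i]
      by (simp add: divide_ennreal_def inverse_ennreal inverse_eq_divide)
    have "ennreal (g $ i) * class_loss D l f i =
       ennreal (g $ i / class_prior D i) * (\<integral>\<^sup>+ x. ennreal (\<eta> i x) * ennreal (l i (f x)) \<partial>(distr D M fst))"
    proof -
      have "ennreal (g $ i / class_prior D i) = ennreal (g $ i) * ennreal (1 / class_prior D i)"
        using pi_pos[of i] gnn[of i] by (simp add: ennreal_mult[symmetric])
      then show ?thesis unfolding I by (simp add: mult_ac)
    qed
    also have "\<dots> = (\<integral>\<^sup>+ x. ennreal (g $ i / class_prior D i) * (ennreal (\<eta> i x) * ennreal (l i (f x))) \<partial>(distr D M fst))"
      using hm eta_meas by (subst nn_integral_cmult) auto
    also have "\<dots> = (\<integral>\<^sup>+ x. ennreal (g $ i / class_prior D i * \<eta> i x * l i (f x)) \<partial>(distr D M fst))"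
    proof (rule nn_integral_cong)
      fix x assume "x \<in> space (distr D M fst)"
      then have x: "x \<in> space M" by simp
      have a: "0 \<le> g $ i / class_prior D i" using gnn[of i] pi_pos[of i] by simp
      have b: "0 \<le> \<eta> i x" by (rule eta_nonneg)
      have c: "0 \<le> l i (f x)" by (rule lnn[OF x])
      show "ennreal (g $ i / class_prior D i) * (ennreal (\<eta> i x) * ennreal (l i (f x))) =
         ennreal (g $ i / class_prior D i * \<eta> i x * l i (f x))"
        by (subst ennreal_mult[OF mult_nonneg_nonneg[OF a b] c], subst ennreal_mult[OF a b]) (simp only: mult.assoc)
    qed
    finally show ?thesis .
  qed
  have "weighted_loss D l g f = (\<Sum>i\<in>UNIV. (\<integral>\<^sup>+ x. ennreal (g $ i / class_prior D i * \<eta> i x * l i (f x)) \<partial>(distr D M fst)))"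
    unfolding weighted_loss_def using trm by simp
  also have "\<dots> = (\<integral>\<^sup>+ x. (\<Sum>i\<in>UNIV. ennreal (g $ i / class_prior D i * \<eta> i x * l i (f x))) \<partial>(distr D M fst))"
    using mi by (subst nn_integral_sum) auto
  also have "\<dots> = (\<integral>\<^sup>+ x. ennreal (\<Sum>i\<in>UNIV. g $ i / class_prior D i * \<eta> i x * l i (f x)) \<partial>(distr D M fst))"
  proof (rule nn_integral_cong)
    fix x assume "x \<in> space (distr D M fst)"
    then have x: "x \<in> space M" by simp
    have nn: "\<And>i. 0 \<le> g $ i / class_prior D i * \<eta> i x * l i (f x)"
      by (intro mult_nonneg_nonneg divide_nonneg_nonneg gnn eta_nonneg lnn[OF x] less_imp_le[OF pi_pos])
    show "(\<Sum>i\<in>UNIV. ennreal (g $ i / class_prior D i * \<eta> i x * l i (f x))) =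
      ennreal (\<Sum>i\<in>UNIV. g $ i / class_prior D i * \<eta> i x * l i (f x))"
      by (rule sum_ennreal) (rule nn)
  qed
  finally show ?thesis .
qed

theorem lemma1:
  fixes M :: "'a measure"
    and D :: "('a \<times> 'm::finite) measure"
    and \<eta> :: "'m \<Rightarrow> 'a \<Rightarrow> real"
    and l :: "'m \<Rightarrow> real ^ 'm \<Rightarrow> real"
    and g c :: "real ^ 'm"
  assumes D: "prob_space D"
    and sets_D: "sets D = sets (M \<Otimes>\<^sub>M count_space UNIV)"
    and pi_pos: "\<And>y. class_prior D y > 0"
    and eta_meas: "\<And>y. \<eta> y \<in> borel_measurable M"
    and eta_nonneg: "\<And>y x. 0 \<le> \<eta> y x"
    and eta_cond: "\<And>y A. A \<in> sets M \<Longrightarrow>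
          emeasure D (A \<times> {y}) = (\<integral>\<^sup>+ x. ennreal (\<eta> y x) * indicator A x \<partial>(distr D M fst))"
    and proper: "proper_loss l"
    and l_meas: "\<And>y. l y \<in> borel_measurable (restrict_space borel prob_simplex)"
    and g: "g \<in> prob_simplex"
    and c: "c \<in> prob_simplex"
  shows "fstar D \<eta> g c \<in> borel_measurable M \<and>
         (\<forall>x \<in> space M. fstar D \<eta> g c x \<in> prob_simplex) \<and>
         (\<forall>f. f \<in> borel_measurable M \<longrightarrow> (\<forall>x \<in> space M. f x \<in> prob_simplex) \<longrightarrow>
            weighted_loss D l g (fstar D \<eta> g c) \<le> weighted_loss D l g f)"
proof -
  note eta_meas[measurable]
  define w where "w i x = g $ i / class_prior D i * \<eta> i x" for i x
  define den where "den x = (\<Sum>j\<in>UNIV. w j x)" for x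
  have gnn: "\<And>i. 0 \<le> g $ i" using g by (simp add: prob_simplex_def)
  have wnn: "\<And>i x. 0 \<le> w i x" unfolding w_def
    using gnn pi_pos eta_nonneg by (auto intro!: mult_nonneg_nonneg divide_nonneg_pos)
  have den_nn: "\<And>x. 0 \<le> den x" unfolding den_def using wnn by (simp add: sum_nonneg)
  have fs_eq: "fstar D \<eta> g c = (\<lambda>x. if den x > 0 then (\<chi> y. w y x / den x) else c)"
    by (rule ext) (simp add: fstar_def den_def w_def Let_def)
  have meas: "fstar D \<eta> g c \<in> borel_measurable M"
    unfolding fs_eq
  proof (rule vec_borel_measurable)
    fix i
    have "(\<lambda>x. (if den x > 0 then (\<chi> y. w y x / den x) else c) $ i)
        = (\<lambda>x. if 0 < den x then w i x / den x else c $ i)" by auto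
    moreover have "(\<lambda>x. if 0 < den x then w i x / den x else c $ i) \<in> borel_measurable M"
      unfolding den_def w_def by measurable
    ultimately show "(\<lambda>x. (if den x > 0 then (\<chi> y. w y x / den x) else c) $ i) \<in> borel_measurable M"
      by simp
  qed
  have fs_in: "fstar D \<eta> g c x \<in> prob_simplex" for x
  proof (cases "den x > 0")
    case True
    have "(\<Sum>i\<in>UNIV. w i x / den x) = 1"
      using True by (simp add: sum_divide_distrib[symmetric] den_def)
    then show ?thesis using True wnn
      by (simp add: fs_eq prob_simplex_def)
  next
    case False
    then show ?thesis using c by (simp add: fs_eq)
  qed
  have pw: "(\<Sum>i\<in>UNIV. w i x * l i (fstar D \<eta> g c x)) \<le> (\<Sum>i\<in>UNIV. w i x * l i q)"
    if q: "q \<in> prob_simplex" for x q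
  proof (cases "den x > 0")
    case True
    define p where "p = fstar D \<eta> g c x"
    have p: "p = (\<chi> y. w y x / den x)" using True by (simp add: p_def fs_eq)
    have pin: "p \<in> prob_simplex" using fs_in p_def by simp
    have "(\<Sum>y\<in>UNIV. p $ y * l y p) \<le> (\<Sum>y\<in>UNIV. p $ y * l y q)"
      using proper pin q unfolding proper_loss_def by blast
    then have "den x * (\<Sum>y\<in>UNIV. p $ y * l y p) \<le> den x * (\<Sum>y\<in>UNIV. p $ y * l y q)"
      by (rule mult_left_mono) (use True in auto)
    moreover have "\<And>r. den x * (\<Sum>y\<in>UNIV. p $ y * l y r) = (\<Sum>y\<in>UNIV. w y x * l y r)"
    proof -
      fix r
      have e: "\<And>y. den x * (p $ y * l y r) = w y x * l y r" using True by (simp add: p)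
      have "den x * (\<Sum>y\<in>UNIV. p $ y * l y r) = (\<Sum>y\<in>UNIV. den x * (p $ y * l y r))"
        by (rule sum_distrib_left)
      also have "\<dots> = (\<Sum>y\<in>UNIV. w y x * l y r)" by (rule sum.cong[OF refl e])
      finally show "den x * (\<Sum>y\<in>UNIV. p $ y * l y r) = (\<Sum>y\<in>UNIV. w y x * l y r)" .
    qed
    ultimately show ?thesis unfolding p_def by metis
  next
    case False
    then have "den x = 0" using den_nn[of x] by simp
    then have "\<And>i. w i x = 0" unfolding den_def using wnn
      by (simp add: sum_nonneg_eq_0_iff)
    then show ?thesis by simp
  qed
  show ?thesis
  proof (intro conjI ballI allI impI)
    show "fstar D \<eta> g c \<in> borel_measurable M" by (rule meas)
    show "\<And>x. fstar D \<eta> g c x \<in> prob_simplex" by (rule fs_in)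
    fix f :: "'a \<Rightarrow> real ^ 'm" assume f: "f \<in> borel_measurable M" and fs: "\<forall>x\<in>space M. f x \<in> prob_simplex"
    have "weighted_loss D l g (fstar D \<eta> g c) =
      (\<integral>\<^sup>+ x. ennreal (\<Sum>i\<in>UNIV. w i x * l i (fstar D \<eta> g c x)) \<partial>(distr D M fst))"
      using wl_integral[OF D sets_D pi_pos eta_meas eta_nonneg eta_cond proper l_meas g meas fs_in]
      by (simp add: w_def)
    also have "\<dots> \<le> (\<integral>\<^sup>+ x. ennreal (\<Sum>i\<in>UNIV. w i x * l i (f x)) \<partial>(distr D M fst))"
      using fs by (intro nn_integral_mono ennreal_leI pw) auto
    also have "\<dots> = weighted_loss D l g f"
      using wl_integral[OF D sets_D pi_pos eta_meas eta_nonneg eta_cond proper l_meas g f] fs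
      by (simp add: w_def)
    finally show "weighted_loss D l g (fstar D \<eta> g c) \<le> weighted_loss D l g f" .
  qed
qed

end
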